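(* Let $(\mathbf{L},\mathbf{R})\in\mathcal{P}_{\mathsf N}$ be centered. Then every contraction map for $(\mathbf{L},\mathbf{R})$ is a dominance map for $(\mathbf{L},\mathbf{R})$. Consequently, if a centered pair admits a contraction map, it admits a dominance map.
   Context: $\mathcal{P}_{\mathsf N}$ denotes the set of pairs $(\mathbf{L},\mathbf{R})$ of $(0,1)$-matrices, $\mathbf{L}$ of size $(\mathsf N+1)\times m_L$ and $\mathbf{R}$ of size $(\mathsf N+1)\times m_R$, such that some index $p\in[\mathsf N+1]$ has row $p$ of $\mathbf{L}$ and row $p$ of $\mathbf{R}$ both zero. $\mathbf{A}_{(i)}$ denotes the $i$-th row; $e$ the all-ones row vector; $|v|=\sum_k|v_k|$; $|x-x'|$ the Hamming distance; $\le$ between vectors is componentwise. The pair is centered if it is balanced ($|\mathbf{L}_{(i)}|=|\mathbf{R}_{(i)}|$ for all $i$) and for some $i$, $\mathbf{L}_{(i)}=e=\mathbf{R}_{(i)}$. A contraction map is $f:\{0,1\}^{m_L}\to\{0,1\}^{m_R}$ with $f(\mathbf{L}_{(i)})=\mathbf{R}_{(i)}$ for all $i$ and $|x-x'|\ge|f(x)-f(x')|$ for all $x,x'$. A dominance map is $f:\{0,1\}^{m_L}\to\{0,1\}^{m_R}$ with $|u|=|f(u)|$ and $\mathbf{L}u^T\le\mathbf{R}f(u)^T$ for all $u\in\{0,1\}^{m_L}$. *)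

theory Defs
  imports Main
begin

text \<open>Binary row vectors in {0,1}^m are represented as lists of naturals of length m
  with entries in {0,1}; a (0,1)-matrix is the list of its rows.\<close>

definition binvec :: "nat \<Rightarrow> nat list \<Rightarrow> bool" where
  "binvec m v \<longleftrightarrow> length v = m \<and> set v \<subseteq> {0, 1}"

definition binmat :: "nat \<Rightarrow> nat \<Rightarrow> nat list list \<Rightarrow> bool" where
  "binmat r m A \<longleftrightarrow> length A = r \<and> (\<forall>i<r. binvec m (A ! i))"

definition wt :: "nat list \<Rightarrow> nat" where
  "wt v = sum_list v"

definition hdist :: "nat list \<Rightarrow> nat list \<Rightarrow> nat" where
  "hdist x y = (\<Sum>k<length x. nat \<bar>int (x ! k) - int (y ! k)\<bar>)"

definition dotp :: "nat list \<Rightarrow> nat list \<Rightarrow> nat" where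
  "dotp r u = (\<Sum>k<length r. r ! k * u ! k)"

definition inP :: "nat \<Rightarrow> nat \<Rightarrow> nat \<Rightarrow> nat list list \<Rightarrow> nat list list \<Rightarrow> bool" where
  "inP N mL mR L R \<longleftrightarrow> binmat (N + 1) mL L \<and> binmat (N + 1) mR R \<and>
     (\<exists>p<N + 1. L ! p = replicate mL 0 \<and> R ! p = replicate mR 0)"

definition centered :: "nat \<Rightarrow> nat \<Rightarrow> nat \<Rightarrow> nat list list \<Rightarrow> nat list list \<Rightarrow> bool" where
  "centered N mL mR L R \<longleftrightarrow>
     (\<forall>i<N + 1. wt (L ! i) = wt (R ! i)) \<and>
     (\<exists>i<N + 1. L ! i = replicate mL 1 \<and> R ! i = replicate mR 1)"

definition binmap :: "nat \<Rightarrow> nat \<Rightarrow> (nat list \<Rightarrow> nat list) \<Rightarrow> bool" where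
  "binmap mL mR f \<longleftrightarrow> (\<forall>x. binvec mL x \<longrightarrow> binvec mR (f x))"

definition contraction_map ::
  "nat \<Rightarrow> nat \<Rightarrow> nat \<Rightarrow> nat list list \<Rightarrow> nat list list \<Rightarrow> (nat list \<Rightarrow> nat list) \<Rightarrow> bool" where
  "contraction_map N mL mR L R f \<longleftrightarrow> binmap mL mR f \<and>
     (\<forall>i<N + 1. f (L ! i) = R ! i) \<and>
     (\<forall>x x'. binvec mL x \<longrightarrow> binvec mL x' \<longrightarrow> hdist (f x) (f x') \<le> hdist x x')"

definition dominance_map ::
  "nat \<Rightarrow> nat \<Rightarrow> nat \<Rightarrow> nat list list \<Rightarrow> nat list list \<Rightarrow> (nat list \<Rightarrow> nat list) \<Rightarrow> bool" where
  "dominance_map N mL mR L R f \<longleftrightarrow> binmap mL mR f \<and>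
     (\<forall>u. binvec mL u \<longrightarrow> wt u = wt (f u) \<and>
        (\<forall>i<N + 1. dotp (L ! i) u \<le> dotp (R ! i) (f u)))"

end

theory Submission
  imports Defs
begin

lemma key:
  assumes "binvec m x" "binvec m y"
  shows "hdist x y + 2 * dotp x y = wt x + wt y"
proof -
  have lx: "length x = m" and ly: "length y = m" using assms by (auto simp: binvec_def)
  have b: "\<And>k. k < m \<Longrightarrow> x ! k \<in> {0,1} \<and> y ! k \<in> {0,1}"
    proof -
    fix k assume k: "k < m"
    have "x ! k \<in> set x" "y ! k \<in> set y" using k lx ly by auto
    then show "x ! k \<in> {0,1} \<and> y ! k \<in> {0,1}" using assms by (auto simp: binvec_def)
  qed
  have t: "\<And>k. k < m \<Longrightarrow> nat \<bar>int (x ! k) - int (y ! k)\<bar> + 2 * (x ! k * y ! k) = x ! k + y ! k"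
    using b by fastforce
  have "hdist x y + 2 * dotp x y = (\<Sum>k<m. nat \<bar>int (x ! k) - int (y ! k)\<bar> + 2 * (x ! k * y ! k))"
    by (simp add: hdist_def dotp_def lx sum.distrib sum_distrib_left)
  also have "\<dots> = (\<Sum>k<m. x ! k + y ! k)" using t by simp
  also have "\<dots> = wt x + wt y"
    by (simp add: wt_def sum_list_sum_nth lx ly sum.distrib atLeast0LessThan)
  finally show ?thesis .
qed

lemma binvec_rep: "c \<in> {0,1} \<Longrightarrow> binvec m (replicate m c)"
  by (auto simp: binvec_def)

lemma dotp0: "length x = m \<Longrightarrow> dotp x (replicate m 0) = 0"
  by (simp add: dotp_def)

lemma dotp1: "length x = m \<Longrightarrow> dotp x (replicate m 1) = wt x"
  by (simp add: dotp_def wt_def sum_list_sum_nth atLeast0LessThan)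

lemma wtrep: "wt (replicate m c) = m * c"
  by (simp add: wt_def sum_list_replicate)

theorem corollary2:
  fixes N mL mR :: nat and L R :: "nat list list"
  assumes "inP N mL mR L R" and "centered N mL mR L R"
  shows "(\<forall>f. contraction_map N mL mR L R f \<longrightarrow> dominance_map N mL mR L R f) \<and>
         ((\<exists>f. contraction_map N mL mR L R f) \<longrightarrow> (\<exists>g. dominance_map N mL mR L R g))"
proof -
  obtain p where p: "p < N + 1" "L ! p = replicate mL 0" "R ! p = replicate mR 0"
    using assms(1) by (auto simp: inP_def)
  obtain q where q: "q < N + 1" "L ! q = replicate mL 1" "R ! q = replicate mR 1"
    using assms(2) by (auto simp: centered_def)
  have bal: "\<And>i. i < N + 1 \<Longrightarrow> wt (L ! i) = wt (R ! i)" using assms(2) by (auto simp: centered_def)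
  have mm: "mL = mR" using bal[OF q(1)] q by (simp add: wtrep)
  have bL: "\<And>i. i < N + 1 \<Longrightarrow> binvec mL (L ! i)" and bR: "\<And>i. i < N + 1 \<Longrightarrow> binvec mR (R ! i)"
    using assms(1) by (auto simp: inP_def binmat_def)
  have main: "dominance_map N mL mR L R f" if c: "contraction_map N mL mR L R f" for f
  proof -
    have bm: "binmap mL mR f" and fi: "\<And>i. i < N + 1 \<Longrightarrow> f (L ! i) = R ! i"
      and hd: "\<And>x x'. binvec mL x \<Longrightarrow> binvec mL x' \<Longrightarrow> hdist (f x) (f x') \<le> hdist x x'"
      using c by (auto simp: contraction_map_def)
    show ?thesis unfolding dominance_map_def
    proof (intro conjI allI impI bm)
      fix u assume u: "binvec mL u"
      have fu: "binvec mR (f u)" using bm u by (auto simp: binmap_def)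
      have lu: "length u = mL" and lfu: "length (f u) = mR" using u fu by (auto simp: binvec_def)
      have z: "binvec mL (replicate mL 0)" "binvec mL (replicate mL 1)"
        "binvec mR (replicate mR 0)" "binvec mR (replicate mR 1)" by (auto intro: binvec_rep)
      have h0: "hdist (f u) (R ! p) \<le> hdist u (L ! p)" using hd[OF u z(1)] fi[OF p(1)] p by simp
      have h1: "hdist (f u) (R ! q) \<le> hdist u (L ! q)" using hd[OF u z(2)] fi[OF q(1)] q by simp
      have e0: "hdist u (L ! p) = wt u" using key[OF u z(1)] p dotp0[OF lu] by (simp add: wtrep)
      have e0': "hdist (f u) (R ! p) = wt (f u)" using key[OF fu z(3)] p dotp0[OF lfu] by (simp add: wtrep)
      have e1: "hdist u (L ! q) + 2 * wt u = wt u + mL" using key[OF u z(2)] q dotp1[OF lu] by (simp add: wtrep)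
      have e1': "hdist (f u) (R ! q) + 2 * wt (f u) = wt (f u) + mR" using key[OF fu z(4)] q dotp1[OF lfu] by (simp add: wtrep)
      show w: "wt u = wt (f u)" using h0 h1 e0 e0' e1 e1' mm by linarith
      fix i assume i: "i < N + 1"
      have hi: "hdist (f u) (R ! i) \<le> hdist u (L ! i)" using hd[OF u bL[OF i]] fi[OF i] by simp
      have k1: "hdist u (L ! i) + 2 * dotp u (L ! i) = wt u + wt (L ! i)" using key[OF u bL[OF i]] .
      have k2: "hdist (f u) (R ! i) + 2 * dotp (f u) (R ! i) = wt (f u) + wt (R ! i)" using key[OF fu bR[OF i]] .
      have s1: "dotp u (L ! i) = dotp (L ! i) u" and s2: "dotp (f u) (R ! i) = dotp (R ! i) (f u)"
        using bL[OF i] bR[OF i] lu lfu by (auto simp: dotp_def binvec_def mult.commute)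
      show "dotp (L ! i) u \<le> dotp (R ! i) (f u)" using hi k1 k2 s1 s2 w bal[OF i] by linarith
    qed
  qed
  show ?thesis using main by blast
qed

end
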